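(* A random permutation $\boldsymbol\pi\in\mathcal S_n$ is exchangeable if and only if its distribution is determined by a collection of functions of the form $$p(\pi)=p^{(n)}_k(n_1,\dots,n_k)=\frac{1}{\prod_{j=1}^k(n_j-1)!}\varphi^{(n)}_k(n_1,\dots,n_k)$$ for any $k\in[n]$, where $(\varphi^{(m)})_{m\geq1}$ is an EPPF and $(n_1,\dots,n_k)$ are the cycle lengths of $\pi$.
   Context: $\mathcal S_n$ is the symmetric group on $[n]=\{1,\dots,n\}$. The cycle type of $\pi\in\mathcal S_n$ is $\mathrm{t}(\pi)=(t_1(\pi),\dots,t_n(\pi))$, $t_i(\pi)$ being the number of cycles of length $i$. A random permutation $\boldsymbol\pi\in\mathcal S_n$ is finitely exchangeable if $P(\boldsymbol\pi=\pi)=P(\boldsymbol\pi=\pi')$ whenever $\mathrm{t}(\pi)=\mathrm{t}(\pi')$. The deletion map $\operatorname{del}:\mathcal S_{n+1}\to\mathcal S_n$ removes $n+1$ from the cycle representation: $\operatorname{del}(\sigma)(i)=\sigma(i)$ if $i\neq\sigma^{-1}(n+1)$, and $\operatorname{del}(\sigma)(i)=\sigma(n+1)$ if $i=\sigma^{-1}(n+1)$. A sequence $(\boldsymbol\pi_m)_{m\geq1}$, $\boldsymbol\pi_m\in\mathcal S_m$ with law $\mathcal L_m$, is consistent if $\operatorname{del}(\boldsymbol\pi_{m+1})\sim\mathcal L_m$ for all $m$. A random permutation $\boldsymbol\pi\in\mathcal S_n$ is exchangeable if there is a consistent sequence $(\boldsymbol\pi^\star_m)_{m\geq1}$ of finitely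 exchangeable random permutations with $\boldsymbol\pi^\star_n\overset{d}{=}\boldsymbol\pi$. An EPPF (exchangeable partition probability function) is a collection $(\varphi^{(n)})_{n\ge1}$ of symmetric functions $\varphi^{(n)}_k(n_1,\dots,n_k)$, $\sum_j n_j=n$, giving the probability of a given partition of $[n]$ into $k$ blocks of sizes $n_1,\dots,n_k$ under an exchangeable random partition, and satisfying $\varphi^{(1)}_1(1)=1$ and $\varphi_k^{(n)}(n_1,\dots,n_k)=\sum_{j=1}^k\varphi_k^{(n+1)}(n_1,\dots,n_j+1,\dots,n_k)+\varphi_{k+1}^{(n+1)}(n_1,\dots,n_k,1)$. *)

theory Defs
  imports "HOL-Probability.Probability_Mass_Function" "HOL-Combinatorics.Permutations"
begin

definition perm_cycle :: "(nat \<Rightarrow> nat) \<Rightarrow> nat \<Rightarrow> nat set" where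
  "perm_cycle \<pi> x = {(\<pi> ^^ k) x | k. True}"

definition cycles :: "nat \<Rightarrow> (nat \<Rightarrow> nat) \<Rightarrow> nat set set" where
  "cycles n \<pi> = perm_cycle \<pi> ` {1..n}"

definition cycle_count :: "nat \<Rightarrow> (nat \<Rightarrow> nat) \<Rightarrow> nat \<Rightarrow> nat" where
  "cycle_count n \<pi> i = card {c \<in> cycles n \<pi>. card c = i}"

definition cycle_type :: "nat \<Rightarrow> (nat \<Rightarrow> nat) \<Rightarrow> nat list" where
  "cycle_type n \<pi> = map (cycle_count n \<pi>) [1..<Suc n]"

definition cycle_lengths :: "nat \<Rightarrow> (nat \<Rightarrow> nat) \<Rightarrow> nat multiset" where
  "cycle_lengths n \<pi> = image_mset card (mset_set (cycles n \<pi>))"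

definition random_perm :: "nat \<Rightarrow> (nat \<Rightarrow> nat) pmf \<Rightarrow> bool" where
  "random_perm n P \<longleftrightarrow> set_pmf P \<subseteq> {\<pi>. \<pi> permutes {1..n}}"

definition fin_exchangeable :: "nat \<Rightarrow> (nat \<Rightarrow> nat) pmf \<Rightarrow> bool" where
  "fin_exchangeable n P \<longleftrightarrow> random_perm n P \<and>
     (\<forall>\<pi> \<pi>'. \<pi> permutes {1..n} \<longrightarrow> \<pi>' permutes {1..n} \<longrightarrow>
        cycle_type n \<pi> = cycle_type n \<pi>' \<longrightarrow> pmf P \<pi> = pmf P \<pi>')"

definition del :: "nat \<Rightarrow> (nat \<Rightarrow> nat) \<Rightarrow> (nat \<Rightarrow> nat)" where
  "del n \<sigma> = (\<lambda>i. if i \<in> {1..n} then (if \<sigma> i = Suc n then \<sigma> (Suc n) else \<sigma> i) else i)"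

definition consistent :: "(nat \<Rightarrow> (nat \<Rightarrow> nat) pmf) \<Rightarrow> bool" where
  "consistent L \<longleftrightarrow> (\<forall>m\<ge>1. map_pmf (del m) (L (Suc m)) = L m)"

definition exchangeable :: "nat \<Rightarrow> (nat \<Rightarrow> nat) pmf \<Rightarrow> bool" where
  "exchangeable n P \<longleftrightarrow>
     (\<exists>L. (\<forall>m\<ge>1. fin_exchangeable m (L m)) \<and> consistent L \<and> L n = P)"

text \<open>EPPF: phi applied to the list (n_1,...,n_k) of positive block sizes is phi^{(n)}_k(n_1,...,n_k)
  with n = sum and k = length; values on other lists are irrelevant.\<close>
definition EPPF :: "(nat list \<Rightarrow> real) \<Rightarrow> bool" where
  "EPPF \<phi> \<longleftrightarrow>
     (\<forall>xs. xs \<noteq> [] \<and> (\<forall>x\<in>set xs. x > 0) \<longrightarrow> \<phi> xs \<ge> 0) \<and>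
     (\<forall>xs ys. xs \<noteq> [] \<and> (\<forall>x\<in>set xs. x > 0) \<and> mset xs = mset ys \<longrightarrow> \<phi> xs = \<phi> ys) \<and>
     \<phi> [1] = 1 \<and>
     (\<forall>xs. xs \<noteq> [] \<and> (\<forall>x\<in>set xs. x > 0) \<longrightarrow>
        \<phi> xs = (\<Sum>j<length xs. \<phi> (xs[j := xs ! j + 1])) + \<phi> (xs @ [1]))"

end

theory Submission
  imports Defs
begin

lemma pc_self: "x \<in> perm_cycle p x"
  unfolding perm_cycle_def by (auto intro!: exI[of _ 0])

lemma pc_step: "y \<in> perm_cycle p x \<Longrightarrow> p y \<in> perm_cycle p x"
  proof -
  assume "y \<in> perm_cycle p x"
  then obtain k where "y = (p ^^ k) x" unfolding perm_cycle_def by auto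
  then have "p y = (p ^^ Suc k) x" by simp
  then show ?thesis unfolding perm_cycle_def by blast
qed

lemma pc_trans: "y \<in> perm_cycle p x \<Longrightarrow> z \<in> perm_cycle p y \<Longrightarrow> z \<in> perm_cycle p x"
proof -
  assume "y \<in> perm_cycle p x" "z \<in> perm_cycle p y"
  then obtain k j where "y = (p ^^ k) x" "z = (p ^^ j) y" unfolding perm_cycle_def by auto
  then have "z = (p ^^ (j + k)) x" by (simp add: funpow_add)
  then show ?thesis unfolding perm_cycle_def by blast
qed

lemma pc_closed:
  assumes "x \<in> A" "\<And>y. y \<in> A \<Longrightarrow> p y \<in> A"
  shows "perm_cycle p x \<subseteq> A"
proof
  fix z assume "z \<in> perm_cycle p x"
  then obtain k where "z = (p ^^ k) x" unfolding perm_cycle_def by auto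
  moreover have "(p ^^ k) x \<in> A" by (induction k) (use assms in auto)
  ultimately show "z \<in> A" by simp
qed

lemma funpow_mult_fix: "(p ^^ n) x = x \<Longrightarrow> (p ^^ (n * k)) x = x"
proof (induction k)
  case (Suc k)
  have "(p ^^ (n * Suc k)) x = (p ^^ n) ((p ^^ (n * k)) x)"
    by (simp add: funpow_add)
  then show ?case using Suc by simp
qed simp

lemma pc_sym:
  assumes "permutation p" "y \<in> perm_cycle p x"
  shows "x \<in> perm_cycle p y"
proof -
  obtain k where y: "y = (p ^^ k) x" using assms(2) unfolding perm_cycle_def by auto
  obtain n where n: "n > 0" "(p ^^ n) x = x" using permutation_self[OF assms(1)] by blast
  have "(p ^^ (n * k)) x = x" using funpow_mult_fix[OF n(2)] .
  moreover have "n * k = (n * k - k) + k" using n(1) by (cases n) auto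
  ultimately have "(p ^^ (n * k - k)) y = x"
    by (metis y funpow_add o_apply)
  then show ?thesis unfolding perm_cycle_def by auto
qed

lemma pc_eq:
  assumes "permutation p" "y \<in> perm_cycle p x"
  shows "perm_cycle p y = perm_cycle p x"
  using pc_trans pc_sym[OF assms(1)] assms(2) by blast

lemma pc_subset: "p permutes S \<Longrightarrow> x \<in> S \<Longrightarrow> perm_cycle p x \<subseteq> S"
  unfolding perm_cycle_def using permutes_in_funpow_image by fastforce

lemma pc_fixed: "p x = x \<Longrightarrow> perm_cycle p x = {x}"
proof -
  assume a: "p x = x"
  have "(p ^^ k) x = x" for k by (induction k) (use a in auto)
  then show ?thesis unfolding perm_cycle_def by auto
qed

lemma perm_fin: "p permutes {1..(m::nat)} \<Longrightarrow> permutation p"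
  using permutes_imp_permutation by blast

lemma pc_finite: "p permutes {1..(m::nat)} \<Longrightarrow> x \<in> {1..m} \<Longrightarrow> finite (perm_cycle p x)"
  by (rule finite_subset[OF pc_subset]) auto

lemma cycles_finite: "finite (cycles m p)"
  unfolding cycles_def by simp

lemma cycles_group:
  assumes "p permutes {1..(m::nat)}" "C \<in> cycles m p"
  shows "{x \<in> {1..m}. perm_cycle p x = C} = C"
proof -
  obtain y where y: "y \<in> {1..m}" "C = perm_cycle p y" using assms(2) unfolding cycles_def by auto
  have 1: "x \<in> C" if "perm_cycle p x = C" for x using pc_self that by metis
  have 2: "x \<in> {1..m}" if "x \<in> C" for x using pc_subset[OF assms(1) y(1)] y that by auto
  have 3: "perm_cycle p x = C" if "x \<in> C" for x using pc_eq[OF perm_fin[OF assms(1)]] y that by auto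
  show ?thesis using 1 2 3 by blast
qed

lemma sum_over_cycles:
  assumes "p permutes {1..(m::nat)}"
  shows "(\<Sum>x\<in>{1..m}. h (perm_cycle p x)) = (\<Sum>C\<in>cycles m p. of_nat (card C) * h C)"
proof -
  have "(\<Sum>x\<in>{1..m}. h (perm_cycle p x)) =
      (\<Sum>C\<in>cycles m p. \<Sum>x\<in>{x \<in> {1..m}. perm_cycle p x = C}. h (perm_cycle p x))"
    by (rule sum.group[symmetric]) (auto simp: cycles_def)
  also have "\<dots> = (\<Sum>C\<in>cycles m p. \<Sum>x\<in>C. h C)"
  proof (rule sum.cong[OF refl])
    fix C assume C: "C \<in> cycles m p"
    have "(\<Sum>x\<in>{x \<in> {1..m}. perm_cycle p x = C}. h (perm_cycle p x)) =
       (\<Sum>x\<in>{x \<in> {1..m}. perm_cycle p x = C}. h C)" by (rule sum.cong) auto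
    also have "\<dots> = (\<Sum>x\<in>C. h C)" by (simp only: cycles_group[OF assms C])
    finally show "(\<Sum>x\<in>{x \<in> {1..m}. perm_cycle p x = C}. h (perm_cycle p x)) = (\<Sum>x\<in>C. h C)" .
  qed
  also have "\<dots> = (\<Sum>C\<in>cycles m p. of_nat (card C) * h C)" by simp
  finally show ?thesis .
qed

lemma sum_cycle_lengths:
  assumes "p permutes {1..(m::nat)}"
  shows "sum_mset (cycle_lengths m p) = m"
proof -
  have "real m = (\<Sum>x\<in>{1..m}. (\<lambda>C. 1::real) (perm_cycle p x))" by simp
  also have "\<dots> = (\<Sum>C\<in>cycles m p. real (card C))" using sum_over_cycles[OF assms, of "\<lambda>C. 1::real"] by simp
  also have "\<dots> = real (\<Sum>C\<in>cycles m p. card C)" by simp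
  finally have "m = (\<Sum>C\<in>cycles m p. card C)" by (simp only: of_nat_eq_iff)
  then show ?thesis unfolding cycle_lengths_def by (simp add: sum_unfold_sum_mset)
qed

lemma cycle_card_bounds:
  assumes "p permutes {1..(m::nat)}" "C \<in> cycles m p"
  shows "1 \<le> card C" "card C \<le> m" "C \<subseteq> {1..m}"
proof -
  obtain y where y: "y \<in> {1..m}" "C = perm_cycle p y" using assms(2) unfolding cycles_def by auto
  show sub: "C \<subseteq> {1..m}" using pc_subset[OF assms(1) y(1)] y by auto
  show "card C \<le> m" using card_mono[OF _ sub] by simp
  have "finite C" using finite_subset[OF sub] by simp
  moreover have "C \<noteq> {}" using y pc_self by auto
  ultimately show "1 \<le> card C" by (simp add: Suc_le_eq card_gt_0_iff)
qed

lemma cycle_lengths_pos: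
  assumes "p permutes {1..(m::nat)}" "c \<in># cycle_lengths m p"
  shows "1 \<le> c" "c \<le> m"
  using assms cycle_card_bounds[OF assms(1)] unfolding cycle_lengths_def
  by (auto simp: cycles_finite)

lemma count_cl: "count (cycle_lengths n p) i = cycle_count n p i"
  unfolding cycle_lengths_def cycle_count_def
  by (simp add: count_image_mset_eq_card_vimage cycles_finite)

lemma cl_iff_ct:
  assumes "p permutes {1..(m::nat)}" "q permutes {1..m}"
  shows "cycle_lengths m p = cycle_lengths m q \<longleftrightarrow> cycle_type m p = cycle_type m q"
proof
  assume "cycle_lengths m p = cycle_lengths m q"
  then show "cycle_type m p = cycle_type m q" unfolding cycle_type_def by (simp add: count_cl[symmetric])
next
  assume a: "cycle_type m p = cycle_type m q"
  show "cycle_lengths m p = cycle_lengths m q"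
  proof (rule multiset_eqI)
    fix i
    show "count (cycle_lengths m p) i = count (cycle_lengths m q) i"
    proof (cases "1 \<le> i \<and> i \<le> m")
      case True
      then have i: "i \<in> set [1..<Suc m]" by auto
      from a have "\<forall>x\<in>set [1..<Suc m]. cycle_count m p x = cycle_count m q x"
        by (simp only: cycle_type_def map_eq_conv)
      then have "cycle_count m p i = cycle_count m q i" using i by blast
      then show ?thesis by (simp add: count_cl)
    next
      case False
      then have "i \<notin># cycle_lengths m p" "i \<notin># cycle_lengths m q"
        using cycle_lengths_pos[OF assms(1)] cycle_lengths_pos[OF assms(2)] by auto
      then show ?thesis by (simp add: not_in_iff)
    qed
  qed
qed

definition insp :: "nat \<Rightarrow> (nat \<Rightarrow> nat) \<Rightarrow> nat \<Rightarrow> (nat \<Rightarrow> nat)" where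
  "insp m \<tau> i = \<tau> \<circ> Transposition.transpose i (Suc m)"

lemma tau_ext:
  assumes "\<tau> permutes {1..(m::nat)}"
  shows "\<tau> permutes {1..Suc m}" "\<tau> (Suc m) = Suc m"
  using assms by (auto intro: permutes_subset permutes_not_in)

lemma tau_in: "\<tau> permutes {1..(m::nat)} \<Longrightarrow> x \<in> {1..m} \<Longrightarrow> \<tau> x \<in> {1..m}"
  using permutes_in_image[of \<tau> "{1..m}" x] by blast

lemma insp_perm:
  assumes "\<tau> permutes {1..(m::nat)}" "i \<in> {1..m}"
  shows "insp m \<tau> i permutes {1..Suc m}"
  unfolding insp_def
  by (rule permutes_compose[OF permutes_swap_id tau_ext(1)[OF assms(1)]]) (use assms(2) in auto)

lemma insp_apply:
  assumes "\<tau> permutes {1..(m::nat)}" "i \<in> {1..m}"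
  shows "insp m \<tau> i i = Suc m" "insp m \<tau> i (Suc m) = \<tau> i"
    "x \<noteq> i \<Longrightarrow> x \<noteq> Suc m \<Longrightarrow> insp m \<tau> i x = \<tau> x"
  using assms tau_ext[OF assms(1)] by (auto simp: insp_def transpose_def)

lemma del_tau:
  assumes "\<tau> permutes {1..(m::nat)}"
  shows "del m \<tau> = \<tau>"
proof
  fix x show "del m \<tau> x = \<tau> x"
    using tau_in[OF assms, of x] permutes_not_in[OF assms, of x] unfolding del_def by auto
qed

lemma del_insp:
  assumes "\<tau> permutes {1..(m::nat)}" "i \<in> {1..m}"
  shows "del m (insp m \<tau> i) = \<tau>"
proof
  fix x show "del m (insp m \<tau> i) x = \<tau> x"
    using tau_in[OF assms(1), of x] permutes_not_in[OF assms(1), of x] insp_apply[OF assms]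
    unfolding del_def by (cases "x = i") auto
qed

lemma del_perm:
  assumes "\<sigma> permutes {1..Suc (m::nat)}"
  shows "del m \<sigma> permutes {1..m}"
proof -
  define j where "j = inv \<sigma> (Suc m)"
  have j: "\<sigma> j = Suc m" unfolding j_def using permutes_inverses[OF assms] by simp
  have jin: "j \<in> {1..Suc m}" unfolding j_def
    using permutes_in_image[OF permutes_inv[OF assms]] by simp
  have jj: "\<sigma> x = Suc m \<Longrightarrow> x = j" for x unfolding j_def using permutes_inverses(2)[OF assms, of x] by auto
  have eq: "del m \<sigma> = \<sigma> \<circ> Transposition.transpose j (Suc m)"
  proof
    fix x
    show "del m \<sigma> x = (\<sigma> \<circ> Transposition.transpose j (Suc m)) x"
    proof (cases "x \<in> {1..Suc m}")
      case False
      have "x \<noteq> j" "x \<noteq> Suc m" "x \<notin> {1..m}" using False jin by auto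
      then show ?thesis by (simp add: del_def transpose_def permutes_not_in[OF assms False])
    next
      case True
      show ?thesis
      proof (cases "x = j")
        case xj: True
        then have "x \<noteq> Suc m \<Longrightarrow> x \<in> {1..m}" using True by auto
        then show ?thesis using xj j by (cases "x = Suc m") (simp_all add: del_def transpose_def)
      next
        case xj: False
        then have "\<sigma> x \<noteq> Suc m" using jj by blast
        show ?thesis
        proof (cases "x = Suc m")
          case True then show ?thesis using xj j by (simp add: del_def transpose_def)
        next
          case False
          then have "x \<in> {1..m}" using \<open>x \<in> {1..Suc m}\<close> by auto
          then show ?thesis using xj False \<open>\<sigma> x \<noteq> Suc m\<close> by (simp add: del_def transpose_def)
        qed
      qed
    qed
  qed
  have "del m \<sigma> permutes {1..Suc m}"
    unfolding eq by (rule permutes_compose[OF permutes_swap_id assms]) (use jin in auto)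
  then show ?thesis
    by (rule permutes_superset) (auto simp: del_def)
qed

lemma pre_set:
  assumes "\<tau> permutes {1..(m::nat)}"
  shows "{\<sigma>. \<sigma> permutes {1..Suc m} \<and> del m \<sigma> = \<tau>} = insert \<tau> (insp m \<tau> ` {1..m})"
proof (rule set_eqI, rule iffI)
  fix \<sigma> assume "\<sigma> \<in> insert \<tau> (insp m \<tau> ` {1..m})"
  then show "\<sigma> \<in> {\<sigma>. \<sigma> permutes {1..Suc m} \<and> del m \<sigma> = \<tau>}"
    using insp_perm[OF assms] del_insp[OF assms] tau_ext[OF assms] del_tau[OF assms] by auto
next
  fix \<sigma> assume "\<sigma> \<in> {\<sigma>. \<sigma> permutes {1..Suc m} \<and> del m \<sigma> = \<tau>}"
  then have s: "\<sigma> permutes {1..Suc m}" and d: "del m \<sigma> = \<tau>" by auto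
  show "\<sigma> \<in> insert \<tau> (insp m \<tau> ` {1..m})"
  proof (cases "\<sigma> (Suc m) = Suc m")
    case True
    have ne: "\<sigma> x \<noteq> Suc m" if "x \<in> {1..m}" for x
    proof
      assume "\<sigma> x = Suc m"
      then have "\<sigma> x = \<sigma> (Suc m)" using True by simp
      then have "x = Suc m" using permutes_inj[OF s] by (simp add: inj_eq)
      then show False using that by simp
    qed
    have "\<sigma> = del m \<sigma>"
    proof
      fix x
      show "\<sigma> x = del m \<sigma> x"
      proof (cases "x \<in> {1..m}")
        case True
        then show ?thesis using ne[OF True] unfolding del_def by simp
      next
        case False
        show ?thesis
        proof (cases "x = Suc m")
          case True then show ?thesis using \<open>\<sigma> (Suc m) = Suc m\<close> False unfolding del_def by simp
        next
          case False2: False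
          then have "x \<notin> {1..Suc m}" using False by auto
          then show ?thesis using permutes_not_in[OF s] False unfolding del_def by simp
        qed
      qed
    qed
    then show ?thesis using d by simp
  next
    case False
    define i where "i = inv \<sigma> (Suc m)"
    have si: "\<sigma> i = Suc m" unfolding i_def using permutes_inverses[OF s] by simp
    have iin: "i \<in> {1..Suc m}" unfolding i_def
      using permutes_in_image[OF permutes_inv[OF s]] by simp
    have ii: "i \<noteq> Suc m" using si False by auto
    have iin': "i \<in> {1..m}" using iin ii by auto
    have jj: "\<sigma> x = Suc m \<Longrightarrow> x = i" for x unfolding i_def using permutes_inverses(2)[OF s, of x] by auto
    have "\<sigma> = insp m \<tau> i"
    proof
      fix x
      show "\<sigma> x = insp m \<tau> i x"
      proof (cases "x = i")
        case True then show ?thesis using insp_apply[OF assms iin'] si by simp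
      next
        case xi: False
        show ?thesis
        proof (cases "x = Suc m")
          case True
          have "\<tau> i = \<sigma> (Suc m)" using d[symmetric] si iin' unfolding del_def by simp
          then show ?thesis using insp_apply[OF assms iin'] True by simp
        next
          case False
          then have "insp m \<tau> i x = \<tau> x" using insp_apply[OF assms iin'] xi by simp
          moreover have "\<sigma> x \<noteq> Suc m" using jj xi by blast
          moreover have "x \<in> {1..m} \<or> x \<notin> {1..Suc m}" using False by auto
          ultimately show ?thesis using d[symmetric] permutes_not_in[OF s, of x]
            unfolding del_def by auto
        qed
      qed
    qed
    then show ?thesis using iin' by auto
  qed
qed

lemma insp_inj:
  assumes "\<tau> permutes {1..(m::nat)}"
  shows "inj_on (insp m \<tau>) {1..m}"
proof
  fix i j assume ij: "i \<in> {1..m}" "j \<in> {1..m}" "insp m \<tau> i = insp m \<tau> j"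
  show "i = j"
  proof (rule ccontr)
    assume "i \<noteq> j"
    then have "insp m \<tau> j i = \<tau> i" using insp_apply(3)[OF assms ij(2), of i] ij by auto
    moreover have "\<tau> i \<noteq> Suc m" using tau_in[OF assms ij(1)] by auto
    ultimately show False using insp_apply(1)[OF assms ij(1)] ij(3) by simp
  qed
qed

lemma tau_notin_insp:
  assumes "\<tau> permutes {1..(m::nat)}"
  shows "\<tau> \<notin> insp m \<tau> ` {1..m}"
proof
  assume "\<tau> \<in> insp m \<tau> ` {1..m}"
  then obtain i where i: "i \<in> {1..m}" "\<tau> = insp m \<tau> i" by auto
  then have "\<tau> (Suc m) = \<tau> i" using insp_apply(2)[OF assms i(1)] by simp
  then show False using tau_ext(2)[OF assms] tau_in[OF assms i(1)] by auto
qed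

lemma cl_ext:
  assumes "\<tau> permutes {1..(m::nat)}"
  shows "cycle_lengths (Suc m) \<tau> = add_mset 1 (cycle_lengths m \<tau>)"
proof -
  have "cycles (Suc m) \<tau> = insert (perm_cycle \<tau> (Suc m)) (cycles m \<tau>)"
    unfolding cycles_def by (simp add: atLeastAtMostSuc_conv)
  also have "perm_cycle \<tau> (Suc m) = {Suc m}" using pc_fixed tau_ext(2)[OF assms] by blast
  finally have c: "cycles (Suc m) \<tau> = insert {Suc m} (cycles m \<tau>)" .
  have "{Suc m} \<notin> cycles m \<tau>" using cycle_card_bounds(3)[OF assms] by fastforce
  then show ?thesis unfolding cycle_lengths_def c using cycles_finite by simp
qed

lemma cl_insp:
  assumes t: "\<tau> permutes {1..(m::nat)}" and i: "i \<in> {1..m}"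
  shows "cycle_lengths (Suc m) (insp m \<tau> i) =
     add_mset (Suc (card (perm_cycle \<tau> i))) (cycle_lengths m \<tau> - {#card (perm_cycle \<tau> i)#})"
proof -
  define \<sigma> where "\<sigma> = insp m \<tau> i"
  define C where "C = perm_cycle \<tau> i"
  define D where "D = insert (Suc m) C"
  define R where "R = perm_cycle \<tau> ` ({1..m} - C)"
  have sp: "\<sigma> permutes {1..Suc m}" unfolding \<sigma>_def using insp_perm[OF t i] .
  have sperm: "permutation \<sigma>" using perm_fin[OF sp] .
  have tperm: "permutation \<tau>" using perm_fin[OF t] .
  have Csub: "C \<subseteq> {1..m}" unfolding C_def using pc_subset[OF t i] .
  have iC: "i \<in> C" unfolding C_def using pc_self .
  have sa: "\<sigma> i = Suc m" "\<sigma> (Suc m) = \<tau> i" "\<And>x. x \<noteq> i \<Longrightarrow> x \<noteq> Suc m \<Longrightarrow> \<sigma> x = \<tau> x"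
    unfolding \<sigma>_def using insp_apply[OF t i] by auto
  have A: "perm_cycle \<sigma> x = perm_cycle \<tau> x" if x: "x \<in> {1..m} - C" for x
  proof -
    have disj: "z \<notin> C" if "z \<in> perm_cycle \<tau> x" for z
    proof
      assume "z \<in> C"
      then have "perm_cycle \<tau> z = C" unfolding C_def using pc_eq[OF tperm] by blast
      moreover have "perm_cycle \<tau> z = perm_cycle \<tau> x" using pc_eq[OF tperm that] .
      ultimately show False using x pc_self by blast
    qed
    have sub: "perm_cycle \<tau> x \<subseteq> {1..m}" using pc_subset[OF t] x by auto
    have "(\<sigma> ^^ k) x = (\<tau> ^^ k) x" for k
    proof (induction k)
      case (Suc k)
      have "(\<tau> ^^ k) x \<in> perm_cycle \<tau> x" unfolding perm_cycle_def by blast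
      then have "(\<tau> ^^ k) x \<noteq> i" "(\<tau> ^^ k) x \<noteq> Suc m" using disj iC sub by auto
      then show ?case using Suc sa(3) by simp
    qed simp
    then show ?thesis unfolding perm_cycle_def by simp
  qed
  have B: "perm_cycle \<sigma> i = D"
  proof
    show "perm_cycle \<sigma> i \<subseteq> D"
    proof (rule pc_closed)
      show "i \<in> D" unfolding D_def using iC by simp
      fix y assume y: "y \<in> D"
      show "\<sigma> y \<in> D"
      proof (cases "y = Suc m")
        case True then show ?thesis using sa(2) pc_step[OF iC[unfolded C_def]] unfolding D_def C_def by simp
      next
        case False
        then have yC: "y \<in> C" using y unfolding D_def by simp
        show ?thesis
        proof (cases "y = i")
          case True then show ?thesis using sa(1) unfolding D_def by simp
        next
          case False
          then have "\<sigma> y = \<tau> y" using sa(3) yC Csub by auto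
          then show ?thesis using pc_step yC unfolding D_def C_def by simp
        qed
      qed
    qed
  next
    have "\<sigma> i \<in> perm_cycle \<sigma> i" by (rule pc_step[OF pc_self])
    then have a: "Suc m \<in> perm_cycle \<sigma> i" using sa(1) by simp
    have "(\<tau> ^^ k) i \<in> perm_cycle \<sigma> i" for k
    proof (induction k)
      case 0 then show ?case using pc_self by simp
    next
      case (Suc k)
      define z where "z = (\<tau> ^^ k) i"
      have zC: "z \<in> C" unfolding z_def C_def perm_cycle_def by blast
      show ?case
      proof (cases "z = i")
        case True
        then have "(\<tau> ^^ Suc k) i = \<sigma> (Suc m)" using sa(2) z_def by simp
        then show ?thesis using pc_step[OF a] by simp
      next
        case False
        then have "(\<tau> ^^ Suc k) i = \<sigma> z" using sa(3) zC Csub z_def by auto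
        then show ?thesis using pc_step Suc z_def by metis
      qed
    qed
    then have "C \<subseteq> perm_cycle \<sigma> i" unfolding C_def perm_cycle_def by blast
    then show "D \<subseteq> perm_cycle \<sigma> i" using a unfolding D_def by simp
  qed
  have Cc: "perm_cycle \<sigma> x = D" if "x \<in> D" for x
    using pc_eq[OF sperm, of x i] B that by simp
  have Tc: "perm_cycle \<tau> x = C" if "x \<in> C" for x
    using pc_eq[OF tperm, of x i] that unfolding C_def by simp
  have U1: "{1..Suc m} = ({1..m} - C) \<union> D" using Csub unfolding D_def by auto
  have U2: "{1..m} = ({1..m} - C) \<union> C" using Csub by auto
  have cs: "cycles (Suc m) \<sigma> = insert D R"
  proof -
    have "cycles (Suc m) \<sigma> = perm_cycle \<sigma> ` ({1..m} - C) \<union> perm_cycle \<sigma> ` D"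
      unfolding cycles_def by (subst U1) (rule image_Un)
    also have "perm_cycle \<sigma> ` ({1..m} - C) = R" unfolding R_def using A by auto
    also have "perm_cycle \<sigma> ` D = {D}" using Cc unfolding D_def by auto
    finally show ?thesis by simp
  qed
  have ct: "cycles m \<tau> = insert C R"
  proof -
    have "cycles m \<tau> = perm_cycle \<tau> ` ({1..m} - C) \<union> perm_cycle \<tau> ` C"
      unfolding cycles_def by (subst U2) (rule image_Un)
    also have "perm_cycle \<tau> ` C = {C}" using Tc iC by auto
    finally show ?thesis unfolding R_def by simp
  qed
  have CR: "C \<notin> R" unfolding R_def using pc_self by fastforce
  have DR: "D \<notin> R" unfolding R_def D_def using pc_subset[OF t] by fastforce
  have fR: "finite R" unfolding R_def by simp
  have fC: "finite C" using finite_subset[OF Csub] by simp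
  have "Suc m \<notin> C" using Csub by auto
  then have cD: "card D = Suc (card C)" unfolding D_def using fC by simp
  have "cycle_lengths (Suc m) \<sigma> = add_mset (card D) (image_mset card (mset_set R))"
    unfolding cycle_lengths_def cs using fR DR by simp
  moreover have "cycle_lengths m \<tau> = add_mset (card C) (image_mset card (mset_set R))"
    unfolding cycle_lengths_def ct using fR CR by simp
  ultimately show ?thesis unfolding \<sigma>_def C_def[symmetric] cD by simp
qed

lemma pmf_map_finite:
  assumes "set_pmf M \<subseteq> A" "finite A"
  shows "pmf (map_pmf f M) y = (\<Sum>x\<in>{x\<in>A. f x = y}. pmf M x)"
proof -
  have "pmf (map_pmf f M) y = measure (measure_pmf M) (f -` {y})" by (rule pmf_map)
  also have "\<dots> = measure (measure_pmf M) (f -` {y} \<inter> set_pmf M)" by (rule measure_Int_set_pmf[symmetric])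
  also have "f -` {y} \<inter> set_pmf M = {x\<in>A. f x = y} \<inter> set_pmf M" using assms(1) by auto
  also have "measure (measure_pmf M) \<dots> = measure (measure_pmf M) {x\<in>A. f x = y}" by (rule measure_Int_set_pmf)
  also have "\<dots> = sum (pmf M) {x\<in>A. f x = y}" using assms(2) by (simp add: measure_measure_pmf_finite)
  finally show ?thesis .
qed

lemma key_sum:
  fixes g :: "nat multiset \<Rightarrow> real"
  assumes t: "\<tau> permutes {1..(m::nat)}"
  shows "(\<Sum>\<sigma>\<in>{\<sigma>. \<sigma> permutes {1..Suc m} \<and> del m \<sigma> = \<tau>}. g (cycle_lengths (Suc m) \<sigma>)) =
     g (add_mset 1 (cycle_lengths m \<tau>)) +
     (\<Sum>c\<in>#cycle_lengths m \<tau>. of_nat c * g (add_mset (Suc c) (cycle_lengths m \<tau> - {#c#})))"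
proof -
  define h where "h C = g (add_mset (Suc (card C)) (cycle_lengths m \<tau> - {#card C#}))" for C :: "nat set"
  have "(\<Sum>\<sigma>\<in>{\<sigma>. \<sigma> permutes {1..Suc m} \<and> del m \<sigma> = \<tau>}. g (cycle_lengths (Suc m) \<sigma>)) =
     (\<Sum>\<sigma>\<in>insert \<tau> (insp m \<tau> ` {1..m}). g (cycle_lengths (Suc m) \<sigma>))"
    by (simp only: pre_set[OF t])
  also have "\<dots> = g (cycle_lengths (Suc m) \<tau>) + (\<Sum>\<sigma>\<in>insp m \<tau> ` {1..m}. g (cycle_lengths (Suc m) \<sigma>))"
    using tau_notin_insp[OF t] by simp
  also have "(\<Sum>\<sigma>\<in>insp m \<tau> ` {1..m}. g (cycle_lengths (Suc m) \<sigma>)) =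
      (\<Sum>i\<in>{1..m}. g (cycle_lengths (Suc m) (insp m \<tau> i)))"
    by (rule sum.reindex_cong[OF insp_inj[OF t] refl]) simp
  also have "\<dots> = (\<Sum>i\<in>{1..m}. h (perm_cycle \<tau> i))"
    by (rule sum.cong[OF refl]) (simp add: h_def cl_insp[OF t])
  also have "\<dots> = (\<Sum>C\<in>cycles m \<tau>. of_nat (card C) * h C)"
    by (rule sum_over_cycles[OF t])
  also have "\<dots> = (\<Sum>c\<in>#cycle_lengths m \<tau>. of_nat c * g (add_mset (Suc c) (cycle_lengths m \<tau> - {#c#})))"
    unfolding h_def cycle_lengths_def[of m \<tau>] sum_unfold_sum_mset
    by (simp add: multiset.map_comp o_def)
  finally show ?thesis using cl_ext[OF t] by simp
qed

lemma PL_mset: "(\<Prod>j\<leftarrow>xs. (fact (j - 1)::real)) = (\<Prod>j\<in>#mset xs. fact (j - 1))"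
  by (induction xs) auto

lemma PL_pos: "(\<Prod>j\<leftarrow>xs. (fact (j - 1)::real)) > 0"
  by (induction xs) auto

lemma msum_idx: "(\<Sum>c\<in>#mset xs. F c) = (\<Sum>j<length xs. F (xs ! j))"
proof -
  have "(\<Sum>c\<in>#mset xs. F c) = sum_list (map F xs)"
    by (simp add: sum_mset_sum_list[symmetric])
  also have "\<dots> = (\<Sum>j=0..<length xs. map F xs ! j)" by (simp only: sum_list_sum_nth length_map)
  also have "\<dots> = (\<Sum>j<length xs. F (xs ! j))" by (simp add: atLeast0LessThan)
  finally show ?thesis .
qed

lemma PL_update:
  assumes "j < length xs" "xs ! j > 0"
  shows "(\<Prod>k\<leftarrow>xs[j := xs ! j + 1]. (fact (k - 1)::real)) = (\<Prod>k\<leftarrow>xs. fact (k - 1)) * of_nat (xs ! j)"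
proof -
  define c where "c = xs ! j"
  define Q where "Q = (\<Prod>k\<in>#mset xs - {#c#}. (fact (k - 1)::real))"
  have cin: "c \<in># mset xs" unfolding c_def using assms(1) by simp
  have "(\<Prod>k\<leftarrow>xs. (fact (k - 1)::real)) = (\<Prod>k\<in>#add_mset c (mset xs - {#c#}). fact (k - 1))"
    unfolding PL_mset using cin by simp
  also have "\<dots> = fact (c - 1) * Q" unfolding Q_def by simp
  finally have 1: "(\<Prod>k\<leftarrow>xs. (fact (k - 1)::real)) = fact (c - 1) * Q" .
  have "(\<Prod>k\<leftarrow>xs[j := xs ! j + 1]. (fact (k - 1)::real)) = (\<Prod>k\<in>#add_mset (c + 1) (mset xs - {#c#}). fact (k - 1))"
    unfolding PL_mset mset_update[OF assms(1)] c_def by simp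
  also have "\<dots> = fact c * Q" unfolding Q_def by simp
  also have "fact c = of_nat c * (fact (c - 1) :: real)" using assms(2) unfolding c_def by (simp add: fact_reduce)
  finally show ?thesis using 1 unfolding c_def by simp
qed

lemma arith_step:
  fixes \<phi> :: "nat list \<Rightarrow> real" and W :: "nat multiset \<Rightarrow> real"
  assumes W: "\<And>ys. ys \<noteq> [] \<Longrightarrow> (\<forall>y\<in>set ys. y > 0) \<Longrightarrow> W (mset ys) = \<phi> ys / (\<Prod>j\<leftarrow>ys. fact (j - 1))"
    and xs: "xs \<noteq> []" "\<forall>x\<in>set xs. x > 0"
  shows "W (add_mset 1 (mset xs)) + (\<Sum>c\<in>#mset xs. of_nat c * W (add_mset (Suc c) (mset xs - {#c#})))
     = ((\<Sum>j<length xs. \<phi> (xs[j := xs ! j + 1])) + \<phi> (xs @ [1])) / (\<Prod>j\<leftarrow>xs. fact (j - 1))"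
proof -
  define P where "P = (\<Prod>j\<leftarrow>xs. (fact (j - 1)::real))"
  have Ppos: "P > 0" unfolding P_def by (rule PL_pos)
  have e1: "W (add_mset 1 (mset xs)) = \<phi> (xs @ [1]) / P"
  proof -
    have "W (add_mset 1 (mset xs)) = W (mset (xs @ [1]))" by simp
    also have "\<dots> = \<phi> (xs @ [1]) / (\<Prod>j\<leftarrow>xs @ [1]. fact (j - 1))" using xs by (intro W) auto
    also have "(\<Prod>j\<leftarrow>xs @ [1]. (fact (j - 1)::real)) = P" unfolding P_def by simp
    finally show ?thesis .
  qed
  have e2: "of_nat (xs ! j) * W (add_mset (Suc (xs ! j)) (mset xs - {#xs ! j#})) = \<phi> (xs[j := xs ! j + 1]) / P"
    if j: "j < length xs" for j
  proof -
    have pos: "xs ! j > 0" using xs(2) j by simp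
    have "add_mset (Suc (xs ! j)) (mset xs - {#xs ! j#}) = mset (xs[j := xs ! j + 1])"
      using mset_update[OF j] by simp
    moreover have "W (mset (xs[j := xs ! j + 1])) = \<phi> (xs[j := xs ! j + 1]) / (P * of_nat (xs ! j))"
    proof -
      have "xs[j := xs ! j + 1] \<noteq> []" using xs by simp
      moreover have "\<forall>y\<in>set (xs[j := xs ! j + 1]). y > 0"
        using xs(2) set_update_subset_insert[of xs j "xs ! j + 1"] by auto
      ultimately show ?thesis using W PL_update[OF j pos] unfolding P_def by simp
    qed
    ultimately show ?thesis using pos Ppos by simp
  qed
  have "(\<Sum>c\<in>#mset xs. of_nat c * W (add_mset (Suc c) (mset xs - {#c#}))) =
      (\<Sum>j<length xs. of_nat (xs ! j) * W (add_mset (Suc (xs ! j)) (mset xs - {#xs ! j#})))"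
    by (rule msum_idx)
  also have "\<dots> = (\<Sum>j<length xs. \<phi> (xs[j := xs ! j + 1]) / P)"
    by (rule sum.cong) (auto simp: e2)
  also have "\<dots> = (\<Sum>j<length xs. \<phi> (xs[j := xs ! j + 1])) / P"
    by (simp add: sum_divide_distrib)
  finally show ?thesis using e1 unfolding P_def[symmetric] by (simp add: add_divide_distrib)
qed

lemma cl_id0: "cycle_lengths 0 id = {#}"
  unfolding cycle_lengths_def cycles_def by simp

lemma cl_id1: "cycle_lengths 1 id = {#1#}"
proof -
  have "perm_cycle id 1 = {1}" by (rule pc_fixed) simp
  then show ?thesis unfolding cycle_lengths_def cycles_def by simp
qed

lemma exist_perm:
  "\<forall>M. sum_mset M = k \<longrightarrow> (\<forall>c\<in>#M. c > 0) \<longrightarrow>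
     (\<exists>\<pi>. \<pi> permutes {1..k} \<and> cycle_lengths k \<pi> = M)"
proof (induction k)
  case 0
  show ?case
  proof (intro allI impI)
    fix M :: "nat multiset" assume a: "sum_mset M = 0" "\<forall>c\<in>#M. c > 0"
    have "M = {#}"
    proof (rule ccontr)
      assume "M \<noteq> {#}"
      then obtain x where "x \<in># M" by (meson multiset_nonemptyE)
      with a show False by force
    qed
    then show "\<exists>\<pi>. \<pi> permutes {1..0} \<and> cycle_lengths 0 \<pi> = M"
      using cl_id0 by (intro exI[of _ id]) simp
  qed
next
  case (Suc m)
  show ?case
  proof (intro allI impI)
    fix M :: "nat multiset" assume s: "sum_mset M = Suc m" and p: "\<forall>c\<in>#M. c > 0"
    show "\<exists>\<pi>. \<pi> permutes {1..Suc m} \<and> cycle_lengths (Suc m) \<pi> = M"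
    proof (cases "1 \<in># M")
      case True
      define M' where "M' = M - {#1#}"
      have MM: "M = add_mset 1 M'" unfolding M'_def using True by simp
      have "sum_mset M' = m" using s unfolding MM by simp
      moreover have "\<forall>c\<in>#M'. c > 0" using p unfolding MM by simp
      ultimately obtain \<tau> where t: "\<tau> permutes {1..m}" "cycle_lengths m \<tau> = M'" using Suc.IH by blast
      show ?thesis using tau_ext(1)[OF t(1)] cl_ext[OF t(1)] t(2) MM by blast
    next
      case False
      have "M \<noteq> {#}" using s by auto
      then obtain c where c: "c \<in># M" by (meson multiset_nonemptyE)
      have "c > 0" using p c by auto
      moreover have "c \<noteq> 1" using c False by auto
      ultimately have c2: "c \<ge> 2" by linarith
      define M' where "M' = add_mset (c - 1) (M - {#c#})"
      have MM: "M = add_mset c (M - {#c#})" using c by simp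
      have "sum_mset M' = m"
      proof -
        have "sum_mset M = c + sum_mset (M - {#c#})" by (subst MM) simp
        then show ?thesis unfolding M'_def using s c2 by simp
      qed
      moreover have "\<forall>c\<in>#M'. c > 0" using p c2 unfolding M'_def by (auto dest: in_diffD)
      ultimately obtain \<tau> where t: "\<tau> permutes {1..m}" "cycle_lengths m \<tau> = M'" using Suc.IH by blast
      have "c - 1 \<in># cycle_lengths m \<tau>" using t(2) unfolding M'_def by simp
      then obtain C where C: "C \<in> cycles m \<tau>" "card C = c - 1"
        unfolding cycle_lengths_def using cycles_finite by auto
      then obtain i where i: "i \<in> {1..m}" "C = perm_cycle \<tau> i" unfolding cycles_def by auto
      have "cycle_lengths (Suc m) (insp m \<tau> i) = add_mset (Suc (c - 1)) (M' - {#c - 1#})"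
        using cl_insp[OF t(1) i(1)] C(2) i(2) t(2) by simp
      also have "\<dots> = M" unfolding M'_def using c2 MM by simp
      finally show ?thesis using insp_perm[OF t(1) i(1)] by blast
    qed
  qed
qed

lemma cl_nonempty_pos:
  assumes "\<pi> permutes {1..(m::nat)}" "m \<ge> 1" "mset xs = cycle_lengths m \<pi>"
  shows "xs \<noteq> []" "\<forall>x\<in>set xs. x > 0"
proof -
  have "sum_list xs = m" using sum_cycle_lengths[OF assms(1)] assms(3) by (metis sum_mset_sum_list)
  then show "xs \<noteq> []" using assms(2) by auto
  show "\<forall>x\<in>set xs. x > 0"
  proof
    fix x assume "x \<in> set xs"
    then have "x \<in># cycle_lengths m \<pi>" using assms(3) by (metis set_mset_mset)
    then show "x > 0" using cycle_lengths_pos(1)[OF assms(1)] by fastforce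
  qed
qed

lemma dir1:
  fixes n :: nat and P :: "(nat \<Rightarrow> nat) pmf"
  assumes n: "n \<ge> 1" and ex: "exchangeable n P"
  shows "\<exists>\<phi>. EPPF \<phi> \<and>
       (\<forall>\<pi> xs. \<pi> permutes {1..n} \<longrightarrow> mset xs = cycle_lengths n \<pi> \<longrightarrow>
          pmf P \<pi> = \<phi> xs / (\<Prod>j\<leftarrow>xs. fact (j - 1)))"
proof -
  obtain L where fe: "\<And>m. m \<ge> 1 \<Longrightarrow> fin_exchangeable m (L m)" and cons: "consistent L" and Ln: "L n = P"
    using ex unfolding exchangeable_def by blast
  define rep where "rep M = (SOME \<pi>. \<pi> permutes {1..sum_mset M} \<and> cycle_lengths (sum_mset M) \<pi> = M)"
    for M :: "nat multiset"
  define W where "W M = pmf (L (sum_mset M)) (rep M)" for M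
  define \<phi> where "\<phi> xs = W (mset xs) * (\<Prod>j\<leftarrow>xs. fact (j - 1))" for xs :: "nat list"
  have supp: "set_pmf (L m) \<subseteq> {\<pi>. \<pi> permutes {1..m}}" if "m \<ge> 1" for m
    using fe[OF that] unfolding fin_exchangeable_def random_perm_def by blast
  have pmfW: "pmf (L k) \<pi> = W (cycle_lengths k \<pi>)" if k: "k \<ge> 1" and \<pi>: "\<pi> permutes {1..k}" for k \<pi>
  proof -
    define M where "M = cycle_lengths k \<pi>"
    have sM: "sum_mset M = k" unfolding M_def by (rule sum_cycle_lengths[OF \<pi>])
    have "\<exists>\<pi>'. \<pi>' permutes {1..sum_mset M} \<and> cycle_lengths (sum_mset M) \<pi>' = M"
      unfolding sM using \<pi> M_def by blast
    then have "rep M permutes {1..sum_mset M} \<and> cycle_lengths (sum_mset M) (rep M) = M"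
      unfolding rep_def by (rule someI_ex)
    then have r: "rep M permutes {1..k}" "cycle_lengths k (rep M) = M" using sM by auto
    have "cycle_type k (rep M) = cycle_type k \<pi>" using cl_iff_ct[OF r(1) \<pi>] r(2) M_def by simp
    then have "pmf (L k) (rep M) = pmf (L k) \<pi>" using fe[OF k] r(1) \<pi> unfolding fin_exchangeable_def by blast
    then show ?thesis unfolding W_def sM M_def[symmetric] by simp
  qed
  have Wphi: "W (mset ys) = \<phi> ys / (\<Prod>j\<leftarrow>ys. fact (j - 1))" for ys
    using PL_pos[of ys] by (simp add: \<phi>_def)
  have E1: "\<forall>xs. xs \<noteq> [] \<and> (\<forall>x\<in>set xs. x > 0) \<longrightarrow> \<phi> xs \<ge> 0"
    using PL_pos by (simp add: \<phi>_def W_def less_imp_le)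
  have E2: "\<forall>xs ys. xs \<noteq> [] \<and> (\<forall>x\<in>set xs. x > 0) \<and> mset xs = mset ys \<longrightarrow> \<phi> xs = \<phi> ys"
  proof (intro allI impI)
    fix xs ys :: "nat list" assume "xs \<noteq> [] \<and> (\<forall>x\<in>set xs. x > 0) \<and> mset xs = mset ys"
    then have m: "mset xs = mset ys" by simp
    show "\<phi> xs = \<phi> ys" by (simp only: \<phi>_def PL_mset m)
  qed
  have E3: "\<phi> [1] = 1"
  proof -
    have "set_pmf (L 1) \<subseteq> {id}" using supp[of 1] by simp
    then have L1: "L 1 = return_pmf id" by (simp add: set_pmf_subset_singleton)
    have "pmf (L 1) id = W (cycle_lengths 1 id)" by (rule pmfW) simp_all
    then have "W {#1#} = 1" using L1 cl_id1 by simp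
    then show ?thesis by (simp add: \<phi>_def)
  qed
  have E4: "\<forall>xs. xs \<noteq> [] \<and> (\<forall>x\<in>set xs. x > 0) \<longrightarrow>
        \<phi> xs = (\<Sum>j<length xs. \<phi> (xs[j := xs ! j + 1])) + \<phi> (xs @ [1])"
  proof (intro allI impI)
    fix xs :: "nat list" assume xs: "xs \<noteq> [] \<and> (\<forall>x\<in>set xs. x > 0)"
    define m where "m = sum_list xs"
    have m1: "m \<ge> 1"
    proof -
      obtain x ys where "xs = x # ys" using xs by (cases xs) auto
      then show ?thesis unfolding m_def using xs by simp
    qed
    have "sum_mset (mset xs) = m" unfolding m_def by (simp add: sum_mset_sum_list)
    moreover have "\<forall>c\<in>#mset xs. c > 0" using xs by simp
    ultimately obtain \<tau> where t: "\<tau> permutes {1..m}" "cycle_lengths m \<tau> = mset xs"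
      using exist_perm by blast
    have "\<phi> xs / (\<Prod>j\<leftarrow>xs. fact (j - 1)) = pmf (L m) \<tau>"
      using pmfW[OF m1 t(1)] t(2) Wphi by simp
    also have "\<dots> = pmf (map_pmf (del m) (L (Suc m))) \<tau>"
      using cons m1 unfolding consistent_def by simp
    also have "\<dots> = (\<Sum>\<sigma>\<in>{x\<in>{\<pi>. \<pi> permutes {1..Suc m}}. del m x = \<tau>}. pmf (L (Suc m)) \<sigma>)"
      by (rule pmf_map_finite[OF supp finite_permutations]) simp_all
    also have "\<dots> = (\<Sum>\<sigma>\<in>{\<sigma>. \<sigma> permutes {1..Suc m} \<and> del m \<sigma> = \<tau>}. W (cycle_lengths (Suc m) \<sigma>))"
      by (rule sum.cong) (auto simp: pmfW)
    also have "\<dots> = W (add_mset 1 (cycle_lengths m \<tau>)) +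
     (\<Sum>c\<in>#cycle_lengths m \<tau>. of_nat c * W (add_mset (Suc c) (cycle_lengths m \<tau> - {#c#})))"
      by (rule key_sum[OF t(1)])
    also have "\<dots> = ((\<Sum>j<length xs. \<phi> (xs[j := xs ! j + 1])) + \<phi> (xs @ [1])) / (\<Prod>j\<leftarrow>xs. fact (j - 1))"
      unfolding t(2) by (rule arith_step) (use Wphi xs in auto)
    finally show "\<phi> xs = (\<Sum>j<length xs. \<phi> (xs[j := xs ! j + 1])) + \<phi> (xs @ [1])"
      using PL_pos[of xs] by (simp add: divide_cancel_right)
  qed
  have "EPPF \<phi>" unfolding EPPF_def using E1 E2 E3 E4 by blast
  moreover have "\<forall>\<pi> xs. \<pi> permutes {1..n} \<longrightarrow> mset xs = cycle_lengths n \<pi> \<longrightarrow>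
          pmf P \<pi> = \<phi> xs / (\<Prod>j\<leftarrow>xs. fact (j - 1))"
    using pmfW[OF n] Wphi Ln by metis
  ultimately show ?thesis by blast
qed

lemma dir2:
  fixes n :: nat and P :: "(nat \<Rightarrow> nat) pmf"
  assumes n: "n \<ge> 1" and rp: "random_perm n P" and E: "EPPF \<phi>"
    and H: "\<forall>\<pi> xs. \<pi> permutes {1..n} \<longrightarrow> mset xs = cycle_lengths n \<pi> \<longrightarrow>
          pmf P \<pi> = \<phi> xs / (\<Prod>j\<leftarrow>xs. fact (j - 1))"
  shows "exchangeable n P"
proof -
  define lst where "lst M = sorted_list_of_multiset M" for M :: "nat multiset"
  define W where "W M = \<phi> (lst M) / (\<Prod>j\<leftarrow>lst M. fact (j - 1))" for M
  have E1: "\<And>xs. xs \<noteq> [] \<Longrightarrow> \<forall>x\<in>set xs. x > 0 \<Longrightarrow> \<phi> xs \<ge> 0"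
    using E unfolding EPPF_def by blast
  have E2: "\<And>xs ys. xs \<noteq> [] \<Longrightarrow> \<forall>x\<in>set xs. x > 0 \<Longrightarrow> mset xs = mset ys \<Longrightarrow> \<phi> xs = \<phi> ys"
    using E unfolding EPPF_def by blast
  have E3: "\<phi> [1] = 1"
    using E unfolding EPPF_def by blast
  have E4: "\<And>xs. xs \<noteq> [] \<Longrightarrow> \<forall>x\<in>set xs. x > 0 \<Longrightarrow>
      \<phi> xs = (\<Sum>j<length xs. \<phi> (xs[j := xs ! j + 1])) + \<phi> (xs @ [1])"
    using E unfolding EPPF_def by blast
  have WE: "W (mset ys) = \<phi> ys / (\<Prod>j\<leftarrow>ys. fact (j - 1))" if "ys \<noteq> []" "\<forall>y\<in>set ys. y > 0" for ys
  proof -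
    have m: "mset (lst (mset ys)) = mset ys" unfolding lst_def by simp
    have "\<phi> (lst (mset ys)) = \<phi> ys" using E2[OF that m[symmetric]] by simp
    moreover have "(\<Prod>j\<leftarrow>lst (mset ys). (fact (j - 1)::real)) = (\<Prod>j\<leftarrow>ys. fact (j - 1))"
      by (simp only: PL_mset m)
    ultimately show ?thesis unfolding W_def by simp
  qed
  have Wnn: "W (cycle_lengths m \<pi>) \<ge> 0" if "\<pi> permutes {1..m}" "m \<ge> 1" for m \<pi>
  proof -
    define xs where "xs = lst (cycle_lengths m \<pi>)"
    have mx: "mset xs = cycle_lengths m \<pi>" by (simp add: xs_def lst_def)
    have xs: "xs \<noteq> []" "\<forall>x\<in>set xs. x>0" using cl_nonempty_pos[OF that mx] by auto
    show ?thesis using WE[OF xs] E1[OF xs] PL_pos[of xs] mx by simp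
  qed
  have CONS: "(\<Sum>\<sigma>\<in>{\<sigma>. \<sigma> permutes {1..Suc m} \<and> del m \<sigma> = \<tau>}. W (cycle_lengths (Suc m) \<sigma>)) =
      W (cycle_lengths m \<tau>)" if t: "\<tau> permutes {1..m}" and m1: "m \<ge> 1" for \<tau> m
  proof -
    define xs where "xs = lst (cycle_lengths m \<tau>)"
    have mx: "mset xs = cycle_lengths m \<tau>" by (simp add: xs_def lst_def)
    have xs: "xs \<noteq> []" "\<forall>x\<in>set xs. x>0" using cl_nonempty_pos[OF t m1 mx] by auto
    have "(\<Sum>\<sigma>\<in>{\<sigma>. \<sigma> permutes {1..Suc m} \<and> del m \<sigma> = \<tau>}. W (cycle_lengths (Suc m) \<sigma>)) =
      W (add_mset 1 (cycle_lengths m \<tau>)) +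
     (\<Sum>c\<in>#cycle_lengths m \<tau>. of_nat c * W (add_mset (Suc c) (cycle_lengths m \<tau> - {#c#})))"
      by (rule key_sum[OF t])
    also have "\<dots> = ((\<Sum>j<length xs. \<phi> (xs[j := xs ! j + 1])) + \<phi> (xs @ [1])) / (\<Prod>j\<leftarrow>xs. fact (j - 1))"
      unfolding mx[symmetric] by (rule arith_step) (use WE xs in auto)
    also have "\<dots> = \<phi> xs / (\<Prod>j\<leftarrow>xs. fact (j - 1))" using E4[OF xs] by simp
    also have "\<dots> = W (cycle_lengths m \<tau>)" using WE[OF xs] mx by simp
    finally show ?thesis .
  qed
  have SUM1: "(\<Sum>\<pi>\<in>{\<pi>. \<pi> permutes {1..m}}. W (cycle_lengths m \<pi>)) = 1" if "m \<ge> 1" for m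
    using that
  proof (induction m rule: nat_induct_at_least)
    case base
    have "{\<pi>. \<pi> permutes {1..1::nat}} = {id}" by auto
    moreover have "W {#1#} = 1" using WE[of "[1]"] E3 by simp
    ultimately show ?case using cl_id1 unfolding id_def by simp
  next
    case (Suc m)
    have img: "del m ` {\<sigma>. \<sigma> permutes {1..Suc m}} \<subseteq> {\<tau>. \<tau> permutes {1..m}}"
      using del_perm by blast
    have "(\<Sum>\<sigma>\<in>{\<sigma>. \<sigma> permutes {1..Suc m}}. W (cycle_lengths (Suc m) \<sigma>)) =
      (\<Sum>\<tau>\<in>{\<tau>. \<tau> permutes {1..m}}. \<Sum>\<sigma>\<in>{\<sigma>\<in>{\<sigma>. \<sigma> permutes {1..Suc m}}. del m \<sigma> = \<tau>}. W (cycle_lengths (Suc m) \<sigma>))"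
      by (rule sum.group[symmetric, OF finite_permutations finite_permutations img]) simp_all
    also have "\<dots> = (\<Sum>\<tau>\<in>{\<tau>. \<tau> permutes {1..m}}. W (cycle_lengths m \<tau>))"
    proof (rule sum.cong[OF refl])
      fix \<tau> assume "\<tau> \<in> {\<tau>. \<tau> permutes {1..m}}"
      then have t: "\<tau> permutes {1..m}" by simp
      have "{\<sigma>\<in>{\<sigma>. \<sigma> permutes {1..Suc m}}. del m \<sigma> = \<tau>} = {\<sigma>. \<sigma> permutes {1..Suc m} \<and> del m \<sigma> = \<tau>}"
        by auto
      then show "(\<Sum>\<sigma>\<in>{\<sigma>\<in>{\<sigma>. \<sigma> permutes {1..Suc m}}. del m \<sigma> = \<tau>}. W (cycle_lengths (Suc m) \<sigma>)) =
          W (cycle_lengths m \<tau>)" using CONS[OF t Suc.hyps] by simp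
    qed
    also have "\<dots> = 1" using Suc.IH .
    finally show ?case .
  qed
  define f where "f m \<pi> = (if \<pi> permutes {1..m} then W (cycle_lengths m \<pi>) else 0)" for m \<pi>
  have fnn: "f m \<pi> \<ge> 0" if "m \<ge> 1" for m \<pi> using Wnn that by (simp add: f_def)
  have fint: "(\<integral>\<^sup>+\<pi>. ennreal (f m \<pi>) \<partial>count_space UNIV) = 1" if m1: "m \<ge> 1" for m
  proof -
    have "(\<integral>\<^sup>+\<pi>. ennreal (f m \<pi>) \<partial>count_space UNIV) = (\<Sum>\<pi>\<in>{\<pi>. \<pi> permutes {1..m}}. ennreal (f m \<pi>))"
      by (rule nn_integral_count_space') (auto simp: f_def finite_permutations)
    also have "\<dots> = ennreal (\<Sum>\<pi>\<in>{\<pi>. \<pi> permutes {1..m}}. f m \<pi>)" using fnn[OF m1] by simp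
    also have "(\<Sum>\<pi>\<in>{\<pi>. \<pi> permutes {1..m}}. f m \<pi>) = (\<Sum>\<pi>\<in>{\<pi>. \<pi> permutes {1..m}}. W (cycle_lengths m \<pi>))"
      by (rule sum.cong) (auto simp: f_def)
    finally show ?thesis using SUM1[OF m1] by simp
  qed
  define L where "L m = (if m = 0 then return_pmf id else embed_pmf (f m))" for m
  have pmfL: "pmf (L m) \<pi> = f m \<pi>" if m1: "m \<ge> 1" for m \<pi>
  proof -
    have "pmf (embed_pmf (f m)) \<pi> = f m \<pi>" by (rule pmf_embed_pmf[OF fnn[OF m1] fint[OF m1]])
    then show ?thesis using m1 by (simp add: L_def)
  qed
  have supp: "set_pmf (L m) \<subseteq> {\<pi>. \<pi> permutes {1..m}}" if m1: "m \<ge> 1" for m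
  proof
    fix \<pi> assume "\<pi> \<in> set_pmf (L m)"
    then have "pmf (L m) \<pi> \<noteq> 0" by (simp add: set_pmf_iff)
    then show "\<pi> \<in> {\<pi>. \<pi> permutes {1..m}}" using pmfL[OF m1] by (auto simp: f_def split: if_splits)
  qed
  have fe: "fin_exchangeable m (L m)" if m1: "m \<ge> 1" for m
    unfolding fin_exchangeable_def random_perm_def
  proof (intro conjI allI impI)
    show "set_pmf (L m) \<subseteq> {\<pi>. \<pi> permutes {1..m}}" by (rule supp[OF m1])
    fix \<pi> \<pi>' assume a: "\<pi> permutes {1..m}" "\<pi>' permutes {1..m}" "cycle_type m \<pi> = cycle_type m \<pi>'"
    then have "cycle_lengths m \<pi> = cycle_lengths m \<pi>'" using cl_iff_ct[OF a(1,2)] by simp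
    then show "pmf (L m) \<pi> = pmf (L m) \<pi>'" using a by (simp add: pmfL[OF m1] f_def)
  qed
  have cons: "consistent L"
    unfolding consistent_def
  proof (intro allI impI)
    fix m :: nat assume m1: "m \<ge> 1"
    show "map_pmf (del m) (L (Suc m)) = L m"
    proof (rule pmf_eqI)
      fix \<tau>
      have "pmf (map_pmf (del m) (L (Suc m))) \<tau> =
          (\<Sum>\<sigma>\<in>{x\<in>{\<pi>. \<pi> permutes {1..Suc m}}. del m x = \<tau>}. pmf (L (Suc m)) \<sigma>)"
        by (rule pmf_map_finite[OF supp finite_permutations]) simp_all
      also have "\<dots> = (\<Sum>\<sigma>\<in>{\<sigma>. \<sigma> permutes {1..Suc m} \<and> del m \<sigma> = \<tau>}. W (cycle_lengths (Suc m) \<sigma>))"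
        by (rule sum.cong) (auto simp: pmfL f_def)
      also have "\<dots> = pmf (L m) \<tau>"
      proof (cases "\<tau> permutes {1..m}")
        case True
        then show ?thesis using CONS[OF True m1] pmfL[OF m1] by (simp add: f_def)
      next
        case False
        then have e: "{\<sigma>. \<sigma> permutes {1..Suc m} \<and> del m \<sigma> = \<tau>} = {}" using del_perm by blast
        show ?thesis unfolding e using False pmfL[OF m1] by (simp add: f_def)
      qed
      finally show "pmf (map_pmf (del m) (L (Suc m))) \<tau> = pmf (L m) \<tau>" .
    qed
  qed
  have "L n = P"
  proof (rule pmf_eqI)
    fix \<pi>
    show "pmf (L n) \<pi> = pmf P \<pi>"
    proof (cases "\<pi> permutes {1..n}")
      case True
      have "pmf P \<pi> = W (cycle_lengths n \<pi>)"
        using H True unfolding W_def lst_def by simp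
      then show ?thesis using True pmfL[OF n] by (simp add: f_def)
    next
      case False
      then have "\<pi> \<notin> set_pmf P" using rp unfolding random_perm_def by blast
      then have "pmf P \<pi> = 0" by (simp add: pmf_eq_0_set_pmf)
      then show ?thesis using False pmfL[OF n] by (simp add: f_def)
    qed
  qed
  then show ?thesis unfolding exchangeable_def using fe cons by blast
qed

theorem theorem1:
  fixes n :: nat and P :: "(nat \<Rightarrow> nat) pmf"
  assumes "n \<ge> 1" and "random_perm n P"
  shows "exchangeable n P \<longleftrightarrow>
    (\<exists>\<phi>. EPPF \<phi> \<and>
       (\<forall>\<pi> xs. \<pi> permutes {1..n} \<longrightarrow> mset xs = cycle_lengths n \<pi> \<longrightarrow>
          pmf P \<pi> = \<phi> xs / (\<Prod>j\<leftarrow>xs. fact (j - 1))))"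
proof
  assume "exchangeable n P"
  then show "\<exists>\<phi>. EPPF \<phi> \<and>
       (\<forall>\<pi> xs. \<pi> permutes {1..n} \<longrightarrow> mset xs = cycle_lengths n \<pi> \<longrightarrow>
          pmf P \<pi> = \<phi> xs / (\<Prod>j\<leftarrow>xs. fact (j - 1)))"
    using dir1 assms(1) by blast
next
  assume "\<exists>\<phi>. EPPF \<phi> \<and>
       (\<forall>\<pi> xs. \<pi> permutes {1..n} \<longrightarrow> mset xs = cycle_lengths n \<pi> \<longrightarrow>
          pmf P \<pi> = \<phi> xs / (\<Prod>j\<leftarrow>xs. fact (j - 1)))"
  then obtain \<phi> where "EPPF \<phi>" and "\<forall>\<pi> xs. \<pi> permutes {1..n} \<longrightarrow> mset xs = cycle_lengths n \<pi> \<longrightarrow>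
          pmf P \<pi> = \<phi> xs / (\<Prod>j\<leftarrow>xs. fact (j - 1))" by blast
  then show "exchangeable n P" using dir2 assms by blast
qed

end
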